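(* Let $(r_k)_{k\ge 1}$ be a sequence of real numbers and let $C_1, C_2, a, \gamma, \varepsilon$ be constants with $0<C_1<1$, $C_2>0$, $0<a<1$, $\gamma\in\mathbb{R}$, and $0<\varepsilon<1-a$. Suppose that for all integers $k\ge 1$, \[ r_{k+1} \le (1 - C_1 k^{-a})\, r_k + C_2\left(k^{-2a+\varepsilon} + k^{-2\gamma+a+\varepsilon}\right). \] Then there exists a constant $\mathscr{E}$ (independent of $k$) such that for all $k\ge 1$, \[ r_{k+1} \le \left(k^{-2\gamma+2a+\varepsilon} + k^{-a+\varepsilon}\right)\mathscr{E}. \]
   Context: In the paper's application, $\gamma$ is the exponent of the step sizes $\gamma_k = O(k^{-\gamma})$ and $a$ is the exponent of the averaging rates $\alpha_k=O(k^{-a})$, with $\gamma>a>0$; the lemma itself places no further condition on $\gamma$. *)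

theory Defs
  imports Complex_Main
begin

end

theory Submission
  imports Defs
begin

lemma big_pow:
  fixes M a :: real assumes "0 < a" "a < 1" "0 < M"
  shows "\<exists>K::nat. \<forall>k\<ge>K. M \<le> real k powr (1 - a)"
proof (intro exI allI impI)
  fix k :: nat assume "nat \<lceil>M powr (1/(1-a))\<rceil> \<le> k"
  hence k: "M powr (1/(1-a)) \<le> real k" by linarith
  have "M = (M powr (1/(1-a))) powr (1-a)" using assms by (simp add: powr_powr)
  also have "\<dots> \<le> real k powr (1-a)" using k assms by (intro powr_mono2) auto
  finally show "M \<le> real k powr (1 - a)" .
qed

lemma powr_neg_le1:
  fixes a :: real assumes "0 \<le> a" "1 \<le> x" shows "x powr (-a) \<le> 1"
proof -
  have "x powr (-a) \<le> x powr 0" using assms by (intro powr_mono) auto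
  thus ?thesis using assms by simp
qed

lemma aux_ineq: fixes c y :: real assumes "0 \<le> c" "0 \<le> y" "y \<le> c/2"
  shows "1 - c \<le> (1 - c/2) * (1 - y)"
proof -
  have "0 \<le> c * y" using assms by simp
  moreover have "(1 - c/2)*(1-y) = 1 - c/2 - y + c*y/2" by (simp add: field_simps)
  ultimately show ?thesis using assms by linarith
qed

lemma key:
  fixes p C a :: real assumes "0 < C" "C < 1" "0 < a" "a < 1"
  shows "\<exists>K::nat. \<forall>k\<ge>K. (1 - C * real k powr (-a)) * (real k - 1) powr p
          \<le> (1 - C/2 * real k powr (-a)) * real k powr p"
proof (cases "p \<ge> 0")
  case True
  show ?thesis
  proof (intro exI allI impI)
    fix k :: nat assume k: "2 \<le> k"
    have x1: "real k powr (-a) \<le> 1" using k assms by (intro powr_neg_le1) auto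
    have x0: "0 \<le> real k powr (-a)" by simp
    have "(real k - 1) powr p \<le> real k powr p" using True k by (intro powr_mono2) auto
    hence "(1 - C * real k powr (-a)) * (real k - 1) powr p \<le> (1 - C * real k powr (-a)) * real k powr p"
      using x1 assms by (intro mult_left_mono) (auto simp: mult_le_one)
    also have "\<dots> \<le> (1 - C/2 * real k powr (-a)) * real k powr p"
      using x0 assms by (intro mult_right_mono) auto
    finally show "(1 - C * real k powr (-a)) * (real k - 1) powr p
          \<le> (1 - C/2 * real k powr (-a)) * real k powr p" .
  qed
next
  case False
  define N where "N = nat \<lceil>-p\<rceil>"
  have N: "-p \<le> real N" unfolding N_def by linarith
  have "0 < 2 * real N / C + 1" using assms by (simp add: add_nonneg_pos)
  then obtain K where K: "\<And>k. k \<ge> K \<Longrightarrow> 2 * real N / C + 1 \<le> real k powr (1 - a)"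
    using big_pow[of a "2 * real N / C + 1"] assms by blast
  show ?thesis
  proof (intro exI[of _ "max K 2"] allI impI)
    fix k :: nat assume k: "max K 2 \<le> k"
    define c where "c = C * real k powr (-a)"
    define t where "t = 1 - 1 / real k"
    have kpos: "real k \<ge> 2" using k by simp
    have "real k powr (-a) \<le> 1" using kpos assms by (intro powr_neg_le1) auto
    hence c0: "0 \<le> c" "c \<le> 1" using assms unfolding c_def
      by (auto simp: mult_le_one)
    have t: "0 < t" "t \<le> 1" using kpos unfolding t_def by auto
    have km1: "real k - 1 = real k * t" using kpos unfolding t_def by (simp add: field_simps)
    have "2 * real N / C + 1 \<le> real k powr (1 - a)" using K k by simp
    also have "real k powr (1 - a) = real k * real k powr (-a)"
      using kpos by (simp add: powr_add[symmetric] powr_minus_divide powr_diff)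
    finally have "2 * real N / C \<le> real k * real k powr (-a)" by simp
    hence "2 * real N \<le> C * (real k * real k powr (-a))" using assms by (simp add: field_simps)
    hence "real N \<le> (c / 2) * real k" unfolding c_def by (simp add: mult_ac)
    hence Nk: "real N / real k \<le> c / 2" using kpos by (simp add: pos_divide_le_eq)
    have "t powr (-p) \<ge> t powr (real N)" using t N by (intro powr_mono') auto
    moreover have "t powr (real N) = t ^ N" using t by (simp add: powr_realpow)
    moreover have "t ^ N \<ge> 1 - real N / real k"
      using Bernoulli_inequality[of "- 1 / real k" N] kpos unfolding t_def by auto
    ultimately have tb: "t powr (-p) \<ge> 1 - real N / real k" by linarith
    have "1 - c \<le> (1 - c/2) * (1 - real N / real k)"
      using Nk c0 by (intro aux_ineq) auto
    also have "\<dots> \<le> (1 - c/2) * t powr (-p)" using tb c0 by (intro mult_left_mono) auto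
    finally have main: "1 - c \<le> (1 - c/2) * t powr (-p)" .
    have tp: "t powr p * t powr (-p) = 1" using t by (simp add: powr_add[symmetric])
    have "(1 - c) * t powr p \<le> (1 - c/2) * t powr (-p) * t powr p"
      using main t by (intro mult_right_mono) auto
    also have "\<dots> = 1 - c/2" using tp by (simp add: algebra_simps)
    finally have "(1 - c) * t powr p \<le> 1 - c/2" .
    hence "(1 - c) * t powr p * real k powr p \<le> (1 - c/2) * real k powr p"
      by (intro mult_right_mono) auto
    moreover have "(real k - 1) powr p = real k powr p * t powr p"
      using km1 t kpos by (simp add: powr_mult)
    ultimately show "(1 - C * real k powr (-a)) * (real k - 1) powr p
          \<le> (1 - C/2 * real k powr (-a)) * real k powr p"
      unfolding c_def by (simp add: algebra_simps)
  qed
qed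

theorem lemma2:
  fixes r :: "nat \<Rightarrow> real" and C1 C2 a \<gamma> \<epsilon> :: real
  assumes "0 < C1" "C1 < 1" "0 < C2" "0 < a" "a < 1" "0 < \<epsilon>" "\<epsilon> < 1 - a"
    and rec: "\<And>k. k \<ge> 1 \<Longrightarrow>
      r (k + 1) \<le> (1 - C1 * real k powr (-a)) * r k
                 + C2 * (real k powr (-2*a + \<epsilon>) + real k powr (-2*\<gamma> + a + \<epsilon>))"
  shows "\<exists>E::real. \<forall>k\<ge>1.
      r (k + 1) \<le> (real k powr (-2*\<gamma> + 2*a + \<epsilon>) + real k powr (-a + \<epsilon>)) * E"
proof -
  define p where "p = -2*\<gamma> + 2*a + \<epsilon>"
  define q where "q = -a + \<epsilon>"
  define b where "b = (\<lambda>k::nat. real k powr p + real k powr q)"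
  have bpos: "b k > 0" if "k \<ge> 1" for k using that unfolding b_def by (simp add: add_pos_pos)
  have force: "real k powr (-2*a + \<epsilon>) + real k powr (-2*\<gamma> + a + \<epsilon>) = real k powr (-a) * b k"
    if "k \<ge> 1" for k
  proof -
    have e1: "-a + p = -2*\<gamma> + a + \<epsilon>" "-a + q = -2*a + \<epsilon>" by (simp_all add: p_def q_def)
    have "real k powr (-a) * b k = real k powr (-a + p) + real k powr (-a + q)"
      using powr_add[of "real k" "-a" p] powr_add[of "real k" "-a" q] unfolding b_def
      by (simp only: distrib_left)
    moreover have "real k powr (-a + p) = real k powr (-2*\<gamma> + a + \<epsilon>)" using e1(1) by (rule arg_cong)
    moreover have "real k powr (-a + q) = real k powr (-2*a + \<epsilon>)" using e1(2) by (rule arg_cong)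
    ultimately show ?thesis by linarith
  qed
  obtain K1 where K1: "\<And>k. k \<ge> K1 \<Longrightarrow> (1 - C1 * real k powr (-a)) * (real k - 1) powr p
          \<le> (1 - C1/2 * real k powr (-a)) * real k powr p"
    using key[of C1 a p] assms by blast
  obtain K2 where K2: "\<And>k. k \<ge> K2 \<Longrightarrow> (1 - C1 * real k powr (-a)) * (real k - 1) powr q
          \<le> (1 - C1/2 * real k powr (-a)) * real k powr q"
    using key[of C1 a q] assms by blast
  define K where "K = max (max K1 K2) 1"
  have bstep: "(1 - C1 * real (k+1) powr (-a)) * b k \<le> (1 - C1/2 * real (k+1) powr (-a)) * b (k+1)"
    if "k \<ge> K" for k
  proof -
    have e: "real (k+1) - 1 = real k" by simp
    have "k + 1 \<ge> K1" "k + 1 \<ge> K2" using that unfolding K_def by auto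
    from K1[OF this(1)] K2[OF this(2)] show ?thesis
      unfolding b_def e by (simp only: distrib_left)
  qed
  define E0 where "E0 = Max ((\<lambda>k. r (k+1) / b k) ` {1..K})"
  define E where "E = max (max E0 (2*C2/C1)) 0"
  have E1: "E \<ge> 0" "2*C2/C1 \<le> E" unfolding E_def by auto
  hence "C1 * (2*C2/C1) \<le> C1 * E" using assms by (intro mult_left_mono) auto
  hence E: "E \<ge> 0" "C2 \<le> C1/2 * E" using E1 assms by auto
  have init: "r (k+1) \<le> b k * E" if "1 \<le> k" "k \<le> K" for k
  proof -
    have "r (k+1) / b k \<le> E0" unfolding E0_def using that by (intro Max_ge) auto
    hence "r (k+1) / b k \<le> E" unfolding E_def by linarith
    thus ?thesis using bpos[OF that(1)] by (simp add: pos_divide_le_eq mult.commute)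
  qed
  have ind: "r (k+1) \<le> b k * E" if "k \<ge> K" for k
    using that
  proof (induction k rule: dec_induct)
    case base
    show ?case using init[of K] unfolding K_def by auto
  next
    case (step k)
    define x where "x = real (k+1) powr (-a)"
    have k1: "k \<ge> 1" "k + 1 \<ge> 1" using step unfolding K_def by auto
    have x: "0 \<le> x" "x \<le> 1" unfolding x_def using assms by (auto intro: powr_neg_le1)
    have cx: "0 \<le> 1 - C1 * x" using x assms by (simp add: mult_le_one)
    have "r (k+1+1) \<le> (1 - C1 * x) * r (k+1) + C2 * (x * b (k+1))"
      using rec[OF k1(2)] force[OF k1(2)] unfolding x_def by simp
    also have "\<dots> \<le> (1 - C1 * x) * (b k * E) + C2 * (x * b (k+1))"
      using step.IH cx by (intro add_right_mono mult_left_mono) auto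
    also have "(1 - C1 * x) * (b k * E) = ((1 - C1 * x) * b k) * E" by simp
    also have "\<dots> \<le> ((1 - C1/2 * x) * b (k+1)) * E"
      using bstep[OF step.hyps(1)] E unfolding x_def by (intro mult_right_mono) auto
    also have "((1 - C1/2 * x) * b (k+1)) * E + C2 * (x * b (k+1))
        = b (k+1) * E - (C1/2 * E - C2) * (x * b (k+1))" by (simp add: algebra_simps)
    also have "\<dots> \<le> b (k+1) * E"
      using E x bpos[OF k1(2)] by (simp add: mult_nonneg_nonneg)
    finally show ?case by simp
  qed
  show ?thesis
  proof (intro exI[of _ E] allI impI)
    fix k :: nat assume "1 \<le> k"
    hence "r (k+1) \<le> b k * E" using init ind by (cases "k \<le> K") auto
    thus "r (k + 1) \<le> (real k powr (-2*\<gamma> + 2*a + \<epsilon>) + real k powr (-a + \<epsilon>)) * E"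
      unfolding b_def p_def q_def .
  qed
qed
end
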